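(* Let $P$ be a priority forest in $\Pi(n)$. If $P$ is a tree, then $\mu(P,\hat1)=-1$. Otherwise $P=T_0\,T_1\cdots T_\ell$ with $\ell\ge1$, and $$\mu(P,\hat1)=(-1)^{\operatorname{corank}P}\prod_{k=0}^{\ell-1}e(T_k),$$ where $e(T)$ denotes the number of edges of $T$.
   Context: $[n]_0=\{0,\dots,n\}$. A priority forest on $[n]_0$ is a rooted forest with vertex set $[n]_0$ whose component trees $T_0,T_1,\dots,T_\ell$ (listed in this order) are increasing (each non-root vertex has a larger label than its parent) and satisfy: for $j<k$ every label of $T_j$ is smaller than every label of $T_k$. The priority lattice $\Pi(n)$ is the set of priority forests on $[n]_0$ ordered by inclusion of edge sets, together with an extra element $\hat1$ greater than all of them; $\mu$ denotes its Möbius function. Its rank function is $\rho(P)=|E(P)|$ and $\rho(\hat1)=n+1$; the corank of a priority forest $P$ is $n+1-\rho(P)$, which equals its number of component trees. *)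

theory Defs
  imports Main
begin

text \<open>A forest on the vertex set [n]_0 = {0..n} is encoded by its set of directed edges
  (parent, child).\<close>

definition conn :: "(nat \<times> nat) set \<Rightarrow> nat \<Rightarrow> nat \<Rightarrow> bool" where
  "conn E x y \<longleftrightarrow> (x, y) \<in> (E \<union> E\<inverse>)\<^sup>*"

definition priority_forest :: "nat \<Rightarrow> (nat \<times> nat) set \<Rightarrow> bool" where
  "priority_forest n E \<longleftrightarrow>
     E \<subseteq> {0..n} \<times> {0..n} \<and>
     (\<forall>(p, c) \<in> E. p < c) \<and>
     (\<forall>p p' c. (p, c) \<in> E \<longrightarrow> (p', c) \<in> E \<longrightarrow> p = p') \<and>
     (\<forall>x \<in> {0..n}. \<forall>y \<in> {0..n}. \<not> conn E x y \<longrightarrow>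
        (\<forall>x' y'. conn E x x' \<longrightarrow> conn E y y' \<longrightarrow> (x < y \<longleftrightarrow> x' < y')))"

text \<open>The priority lattice: priority forests (Some E) plus a top element None.\<close>
definition Pi_carrier :: "nat \<Rightarrow> (nat \<times> nat) set option set" where
  "Pi_carrier n = insert None (Some ` {E. priority_forest n E})"

fun Pi_le :: "(nat \<times> nat) set option \<Rightarrow> (nat \<times> nat) set option \<Rightarrow> bool" where
  "Pi_le _ None = True"
| "Pi_le None (Some _) = False"
| "Pi_le (Some E) (Some F) = (E \<subseteq> F)"

text \<open>The recursion is run with a fuel parameter; fuel card A suffices since every
  recursive call strictly decreases the upper argument.\<close>
fun mobius_fuel :: "nat \<Rightarrow> 'a set \<Rightarrow> ('a \<Rightarrow> 'a \<Rightarrow> bool) \<Rightarrow> 'a \<Rightarrow> 'a \<Rightarrow> int" where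
  "mobius_fuel 0 A le x y = (if x = y then 1 else 0)"
| "mobius_fuel (Suc k) A le x y =
     (if x = y then 1
      else if le x y then
        - (\<Sum>z \<in> {z \<in> A. le x z \<and> le z y \<and> z \<noteq> y}. mobius_fuel k A le x z)
      else 0)"

definition mobius :: "'a set \<Rightarrow> ('a \<Rightarrow> 'a \<Rightarrow> bool) \<Rightarrow> 'a \<Rightarrow> 'a \<Rightarrow> int" where
  "mobius A le x y = mobius_fuel (card A) A le x y"

definition mu_Pi :: "nat \<Rightarrow> (nat \<times> nat) set option \<Rightarrow> (nat \<times> nat) set option \<Rightarrow> int" where
  "mu_Pi n = mobius (Pi_carrier n) Pi_le"

text \<open>Roots of the forest, listed increasingly: r_0 < r_1 < ... < r_l. The k-th tree T_k
  is the component of r_k (by the priority condition, this is the k-th tree in the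
  order T_0, ..., T_l).\<close>
definition forest_roots :: "nat \<Rightarrow> (nat \<times> nat) set \<Rightarrow> nat list" where
  "forest_roots n E = sorted_list_of_set {v \<in> {0..n}. \<forall>p. (p, v) \<notin> E}"

definition tree_vertices :: "nat \<Rightarrow> (nat \<times> nat) set \<Rightarrow> nat \<Rightarrow> nat set" where
  "tree_vertices n E k = {v \<in> {0..n}. conn E (forest_roots n E ! k) v}"

definition tree_edges :: "nat \<Rightarrow> (nat \<times> nat) set \<Rightarrow> nat \<Rightarrow> nat" where
  "tree_edges n E k = card {(p, c) \<in> E. p \<in> tree_vertices n E k \<and> c \<in> tree_vertices n E k}"

definition corank :: "nat \<Rightarrow> (nat \<times> nat) set \<Rightarrow> nat" where
  "corank n E = n + 1 - card E"

end

theory Submission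
  imports Defs
begin

lemma pf_sub: "priority_forest n E \<Longrightarrow> (p,c) \<in> E \<Longrightarrow> p \<le> n \<and> c \<le> n"
  unfolding priority_forest_def by auto
lemma pf_lt: "priority_forest n E \<Longrightarrow> (p,c) \<in> E \<Longrightarrow> p < c"
  unfolding priority_forest_def by auto
lemma pf_up: "priority_forest n E \<Longrightarrow> (p,c) \<in> E \<Longrightarrow> (p',c) \<in> E \<Longrightarrow> p = p'"
  unfolding priority_forest_def by blast
lemma pf_prio: "priority_forest n E \<Longrightarrow> x \<le> n \<Longrightarrow> y \<le> n \<Longrightarrow> \<not> conn E x y
  \<Longrightarrow> conn E x x' \<Longrightarrow> conn E y y' \<Longrightarrow> (x < y \<longleftrightarrow> x' < y')"
  unfolding priority_forest_def by (meson atLeastAtMost_iff le0)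

lemma conn_refl: "conn E x x" unfolding conn_def by simp
lemma conn_sym: "conn E x y \<Longrightarrow> conn E y x"
proof -
  assume "conn E x y"
  hence "(x,y) \<in> (E \<union> E\<inverse>)\<^sup>*" unfolding conn_def .
  hence "(y,x) \<in> ((E \<union> E\<inverse>)\<inverse>)\<^sup>*" by (simp add: rtrancl_converse)
  moreover have "(E \<union> E\<inverse>)\<inverse> = E \<union> E\<inverse>" by auto
  ultimately show ?thesis unfolding conn_def by simp
qed
lemma conn_trans: "conn E x y \<Longrightarrow> conn E y z \<Longrightarrow> conn E x z"
  unfolding conn_def by (meson rtrancl_trans)
lemma conn_edge: "(x,y) \<in> E \<Longrightarrow> conn E x y"
  unfolding conn_def by auto
lemma conn_edge': "(y,x) \<in> E \<Longrightarrow> conn E x y"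
  unfolding conn_def by auto

lemma L1:
  assumes up: "\<And>p p' c. (p,c) \<in> F \<Longrightarrow> (p',c) \<in> F \<Longrightarrow> p = p'"
    and r: "\<And>p. (p,r) \<notin> F" and c: "conn F r v"
  shows "(r,v) \<in> F\<^sup>*"
proof -
  have "(r,v) \<in> (F \<union> F\<inverse>)\<^sup>*" using c unfolding conn_def .
  thus ?thesis
  proof (induction rule: rtrancl_induct)
    case base thus ?case by simp
  next
    case (step y z)
    show ?case
    proof (cases "(y,z) \<in> F")
      case True thus ?thesis using step by (meson rtrancl.simps)
    next
      case False
      hence zy: "(z,y) \<in> F" using step by auto
      from step.IH show ?thesis
      proof (cases rule: rtranclE)
        case base thus ?thesis using zy r by auto
      next
        case (step y') thus ?thesis using zy up by metis
      qed
    qed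
  qed
qed

lemma rtrancl_le: assumes "\<And>p c. (p,c) \<in> F \<Longrightarrow> p < (c::nat)" shows "(r,v) \<in> F\<^sup>* \<Longrightarrow> r \<le> v"
proof (induction rule: rtrancl_induct)
  case base thus ?case by simp
next
  case (step y z) thus ?case using assms by (metis less_imp_le_nat order_trans)
qed

lemma L1': "priority_forest n F \<Longrightarrow> (\<And>p. (p,r) \<notin> F) \<Longrightarrow> conn F r v \<Longrightarrow> r \<le> v"
  by (metis L1 pf_up pf_lt rtrancl_le)

definition roots :: "nat \<Rightarrow> (nat \<times> nat) set \<Rightarrow> nat set" where
  "roots n E = {v \<in> {0..n}. \<forall>p. (p,v) \<notin> E}"

lemma roots_conn_eq: "priority_forest n E \<Longrightarrow> r \<in> roots n E \<Longrightarrow> s \<in> roots n E \<Longrightarrow> conn E r s \<Longrightarrow> r = s"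
  unfolding roots_def by (metis (no_types, lifting) L1' conn_sym le_antisym mem_Collect_eq)

lemma zero_root: "priority_forest n E \<Longrightarrow> 0 \<in> roots n E"
  unfolding roots_def using pf_lt by fastforce

lemma finite_roots: "finite (roots n E)" unfolding roots_def by simp

definition rootof :: "nat \<Rightarrow> (nat \<times> nat) set \<Rightarrow> nat \<Rightarrow> nat" where
  "rootof n E v = Max {r \<in> roots n E. r \<le> v}"

lemma exists_root: assumes pf: "priority_forest n E" shows "v \<le> n \<Longrightarrow> \<exists>r \<in> roots n E. r \<le> v \<and> conn E r v"
proof (induction v rule: less_induct)
  case (less v)
  show ?case
  proof (cases "v \<in> roots n E")
    case True thus ?thesis using conn_refl by blast
  next
    case False
    then obtain p where p: "(p,v) \<in> E" using less.prems unfolding roots_def by auto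
    have "p < v" using pf_lt[OF pf p] .
    then obtain r where "r \<in> roots n E" "r \<le> p" "conn E r p" using less by fastforce
    thus ?thesis using p conn_edge conn_trans \<open>p < v\<close> by (meson less_imp_le_nat order_trans)
  qed
qed

lemma rootof_props: assumes pf: "priority_forest n E" and v: "v \<le> n"
  shows "rootof n E v \<in> roots n E" "rootof n E v \<le> v" "\<And>r. r \<in> roots n E \<Longrightarrow> r \<le> v \<Longrightarrow> r \<le> rootof n E v"
proof -
  have fin: "finite {r \<in> roots n E. r \<le> v}" using finite_roots by simp
  have ne: "0 \<in> {r \<in> roots n E. r \<le> v}" using zero_root[OF pf] by simp
  have "Max {r \<in> roots n E. r \<le> v} \<in> {r \<in> roots n E. r \<le> v}"
    using Max_in[OF fin] ne by blast
  thus "rootof n E v \<in> roots n E" "rootof n E v \<le> v"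
    unfolding rootof_def by auto
  show "\<And>r. r \<in> roots n E \<Longrightarrow> r \<le> v \<Longrightarrow> r \<le> rootof n E v"
    unfolding rootof_def using fin by simp
qed

lemma L2: assumes pf: "priority_forest n E" and v: "v \<le> n"
  shows "conn E (rootof n E v) v"
proof -
  obtain r where r: "r \<in> roots n E" "r \<le> v" "conn E r v" using exists_root[OF pf v] by blast
  let ?m = "rootof n E v"
  have m: "?m \<in> roots n E" "?m \<le> v" "r \<le> ?m" using rootof_props[OF pf v] r by auto
  show ?thesis
  proof (cases "r = ?m")
    case True thus ?thesis using r by simp
  next
    case False
    hence "r < ?m" using m by simp
    have nc: "\<not> conn E r ?m" using roots_conn_eq[OF pf r(1) m(1)] False by blast
    have "r \<le> n" "?m \<le> n" using r m unfolding roots_def by auto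
    from pf_prio[OF pf this nc r(3) conn_refl] \<open>r < ?m\<close> have "v < ?m" by simp
    thus ?thesis using m by simp
  qed
qed

lemma conn_root_iff: assumes pf: "priority_forest n E" and r: "r \<in> roots n E" and v: "v \<le> n"
  shows "conn E r v \<longleftrightarrow> rootof n E v = r"
  using L2[OF pf v] roots_conn_eq[OF pf r rootof_props(1)[OF pf v]] conn_sym conn_trans by metis

definition upar :: "(nat \<times> nat) set \<Rightarrow> bool" where
  "upar S \<longleftrightarrow> (\<forall>p p' c. (p,c) \<in> S \<longrightarrow> (p',c) \<in> S \<longrightarrow> p = p')"

definition chainA :: "nat \<Rightarrow> (nat \<times> nat) set \<Rightarrow> (nat \<times> nat) set" where
  "chainA n E = {(p,c). c \<in> roots n E \<and> p < c \<and> (\<forall>r\<in>roots n E. r \<le> p \<or> c \<le> r)}"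

lemma conn_mono: "E \<subseteq> F \<Longrightarrow> conn E x y \<Longrightarrow> conn F x y"
  unfolding conn_def by (meson Un_mono converse_mono rtrancl_mono subsetD)

lemma chainA_notin: "priority_forest n E \<Longrightarrow> e \<in> chainA n E \<Longrightarrow> e \<notin> E"
  unfolding chainA_def roots_def by auto

lemma cut_edge:
  assumes pf: "priority_forest n E" and SA: "S \<subseteq> chainA n E"
    and c: "c \<in> roots n E" and nS: "\<And>p. (p,c) \<notin> S" and ab: "(a,b) \<in> E \<union> S"
  shows "a < c \<longleftrightarrow> b < c"
proof (cases "(a,b) \<in> E")
  case True
  have ab: "a < b" using pf_lt[OF pf True] .
  have cn: "c \<le> n" "\<forall>p. (p,c) \<notin> E" using c unfolding roots_def by auto
  have bn: "a \<le> n" "b \<le> n" using pf_sub[OF pf True] by auto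
  show ?thesis
  proof (rule ccontr)
    assume "\<not> (a < c \<longleftrightarrow> b < c)"
    hence "a < c" "c \<le> b" using ab by auto
    have nc: "\<not> conn E a c"
    proof
      assume "conn E a c"
      hence "c \<le> a" using L1'[OF pf] cn conn_sym by blast
      thus False using \<open>a < c\<close> by simp
    qed
    from pf_prio[OF pf bn(1) cn(1) nc conn_edge[OF True] conn_refl] \<open>a < c\<close> have "b < c" by simp
    thus False using \<open>c \<le> b\<close> by simp
  qed
next
  case False
  hence "(a,b) \<in> chainA n E" using ab SA by auto
  hence "b \<in> roots n E" "a < b" "\<forall>r\<in>roots n E. r \<le> a \<or> b \<le> r" unfolding chainA_def by auto
  moreover have "b \<noteq> c" using nS False ab by auto
  ultimately show ?thesis using c by force
qed

lemma cut_conn: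
  assumes pf: "priority_forest n E" and SA: "S \<subseteq> chainA n E"
    and c: "c \<in> roots n E" and nS: "\<And>p. (p,c) \<notin> S" and xy: "conn (E \<union> S) x y"
  shows "x < c \<longleftrightarrow> y < c"
proof -
  have "(x,y) \<in> ((E \<union> S) \<union> (E \<union> S)\<inverse>)\<^sup>*" using xy unfolding conn_def .
  thus ?thesis
  proof (induction rule: rtrancl_induct)
    case base thus ?case by simp
  next
    case (step y z)
    thus ?case using cut_edge[OF pf SA c nS] by blast
  qed
qed

lemma bridge:
  assumes pf: "priority_forest n E" and SA: "S \<subseteq> chainA n E"
  shows "y \<le> n \<Longrightarrow> x \<le> y \<Longrightarrow> (\<forall>c\<in>roots n E. x < c \<and> c \<le> y \<longrightarrow> (\<exists>p. (p,c) \<in> S))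
     \<Longrightarrow> conn (E \<union> S) x y"
proof (induction y rule: less_induct)
  case (less y)
  let ?F = "E \<union> S"
  have xn: "x \<le> n" using less by simp
  let ?r = "rootof n E y"
  have r: "?r \<in> roots n E" "?r \<le> y" "conn E ?r y" using rootof_props[OF pf less(2)] L2[OF pf less(2)] by auto
  have rF: "conn ?F ?r y" using conn_mono[OF _ r(3)] by blast
  show ?case
  proof (cases "?r \<le> x")
    case True
    have "rootof n E x = ?r"
      using rootof_props[OF pf xn] rootof_props[OF pf less(2)] True less(3) r
      by (meson le_antisym order_trans)
    hence "conn E x ?r" using L2[OF pf xn] conn_sym by metis
    thus ?thesis using rF conn_mono conn_trans by (metis Un_upper1)
  next
    case False
    then obtain p where p: "(p,?r) \<in> S" using less(4) r by auto
    hence pA: "p < ?r" "\<forall>r'\<in>roots n E. r' \<le> p \<or> ?r \<le> r'" using SA unfolding chainA_def by auto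
    have pr: "conn ?F p ?r" using p conn_edge by blast
    have xp: "conn ?F x p"
    proof (cases "x \<le> p")
      case True
      show ?thesis
        apply (rule less(1)[of p])
        using pA r less(2-4) True by auto
    next
      case False
      have pn: "p \<le> n" using pA r less by simp
      have "rootof n E x \<le> p" using pA(2) rootof_props[OF pf xn] False \<open>\<not> ?r \<le> x\<close> by fastforce
      hence "rootof n E x \<le> rootof n E p" using rootof_props[OF pf pn] rootof_props[OF pf xn] by blast
      moreover have "rootof n E p \<le> rootof n E x" using rootof_props[OF pf pn] rootof_props[OF pf xn] False by simp
      ultimately have "rootof n E x = rootof n E p" by simp
      hence "conn E x p" using L2[OF pf xn] L2[OF pf pn] conn_sym conn_trans by metis
      thus ?thesis using conn_mono by blast
    qed
    show ?thesis using xp pr rF conn_trans by metis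
  qed
qed

lemma claim_a:
  assumes pf: "priority_forest n E" and SA: "S \<subseteq> chainA n E" and up: "upar S"
  shows "priority_forest n (E \<union> S)"
proof -
  let ?F = "E \<union> S"
  have sub: "?F \<subseteq> {0..n} \<times> {0..n}"
  proof
    fix e assume e: "e \<in> ?F"
    obtain a b where ab: "e = (a,b)" by force
    show "e \<in> {0..n} \<times> {0..n}"
    proof (cases "e \<in> E")
      case True thus ?thesis using pf_sub[OF pf] ab by auto
    next
      case False
      hence "(a,b) \<in> chainA n E" using e SA ab by auto
      hence "a < b" "b \<le> n" unfolding chainA_def roots_def by auto
      thus ?thesis using ab by auto
    qed
  qed
  have lt: "\<forall>(p, c) \<in> ?F. p < c"
  proof
    fix e assume e: "e \<in> ?F"
    obtain a b where ab: "e = (a,b)" by force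
    have "a < b"
    proof (cases "e \<in> E")
      case True thus ?thesis using pf_lt[OF pf] ab by auto
    next
      case False
      hence "(a,b) \<in> chainA n E" using e SA ab by auto
      thus "a < b" unfolding chainA_def by auto
    qed
    thus "case e of (p,c) \<Rightarrow> p < c" using ab by simp
  qed
  have upF: "\<forall>p p' c. (p, c) \<in> ?F \<longrightarrow> (p', c) \<in> ?F \<longrightarrow> p = p'"
  proof (intro allI impI)
    fix p p' c assume a: "(p, c) \<in> ?F" "(p', c) \<in> ?F"
    have noE: "(q,c) \<notin> E" if "(q',c) \<in> S" for q q'
    proof -
      have "c \<in> roots n E" using that SA unfolding chainA_def by auto
      thus ?thesis unfolding roots_def by auto
    qed
    show "p = p'"
    proof (cases "(p,c) \<in> E")
      case True
      hence "(p',c) \<in> E" using a noE by blast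
      thus ?thesis using pf_up[OF pf] True by blast
    next
      case False
      hence "(p,c) \<in> S" using a by auto
      hence "(p',c) \<in> S" using a noE by blast
      thus ?thesis using up \<open>(p,c) \<in> S\<close> unfolding upar_def by blast
    qed
  qed
  have cutex: "\<exists>c\<in>roots n E. x < c \<and> c \<le> y \<and> (\<forall>p. (p,c) \<notin> S)"
    if "x < y" "y \<le> n" "\<not> conn ?F x y" for x y
  proof (rule ccontr)
    assume "\<not> ?thesis"
    hence "\<forall>c\<in>roots n E. x < c \<and> c \<le> y \<longrightarrow> (\<exists>p. (p,c) \<in> S)" by blast
    hence "conn ?F x y" using bridge[OF pf SA that(2)] that(1) by simp
    thus False using that(3) by simp
  qed
  have prio: "\<not> conn ?F x y \<longrightarrow> (\<forall>x' y'. conn ?F x x' \<longrightarrow> conn ?F y y' \<longrightarrow> (x < y \<longleftrightarrow> x' < y'))"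
    if xyn: "x \<in> {0..n}" "y \<in> {0..n}" for x y
  proof (intro impI allI)
    fix x' y' assume nc: "\<not> conn ?F x y" and cx: "conn ?F x x'" and cy: "conn ?F y y'"
    have "x \<noteq> y" using nc conn_refl by metis
    show "x < y \<longleftrightarrow> x' < y'"
    proof (cases "x < y")
      case True
      then obtain c where c: "c\<in>roots n E" "x < c" "c \<le> y" "\<forall>p. (p,c) \<notin> S"
        using cutex[of x y] xyn nc by auto
      have "x' < c" using cut_conn[OF pf SA c(1) _ cx] c by auto
      moreover have "\<not> y' < c" using cut_conn[OF pf SA c(1) _ cy] c by auto
      ultimately show ?thesis using True by simp
    next
      case False
      hence "y < x" using \<open>x \<noteq> y\<close> by simp
      moreover have "\<not> conn ?F y x" using nc conn_sym by metis
      ultimately obtain c where c: "c\<in>roots n E" "y < c" "c \<le> x" "\<forall>p. (p,c) \<notin> S"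
        using cutex[of y x] xyn by auto
      have "y' < c" using cut_conn[OF pf SA c(1) _ cy] c by auto
      moreover have "\<not> x' < c" using cut_conn[OF pf SA c(1) _ cx] c by auto
      ultimately show ?thesis using False by simp
    qed
  qed
  show ?thesis unfolding priority_forest_def using sub lt upF prio by blast
qed

lemma claim_b:
  assumes pf: "priority_forest n E" and pfF: "priority_forest n F" and EF: "E \<subseteq> F" and ne: "F \<noteq> E"
  shows "F \<inter> chainA n E \<noteq> {}"
proof -
  let ?D = "{c \<in> roots n E. \<exists>p. (p,c) \<in> F}"
  obtain p0 c0 where e: "(p0,c0) \<in> F" "(p0,c0) \<notin> E" using EF ne by auto
  have "\<forall>q. (q,c0) \<notin> E"
  proof (intro allI notI)
    fix q assume "(q,c0) \<in> E"
    hence "(q,c0) \<in> F" using EF by blast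
    hence "q = p0" using pf_up[OF pfF _ e(1)] by blast
    thus False using \<open>(q,c0) \<in> E\<close> e(2) by simp
  qed
  hence "c0 \<in> roots n E"
    unfolding roots_def using pf_sub[OF pfF e(1)] by auto
  hence Dne: "?D \<noteq> {}" using e by auto
  have Dfin: "finite ?D" using finite_roots by simp
  define c where "c = Min ?D"
  have cD: "c \<in> ?D" using Min_in[OF Dfin Dne] c_def by simp
  then obtain p where p: "(p,c) \<in> F" by auto
  have pc: "p < c" using pf_lt[OF pfF p] .
  have "\<forall>r\<in>roots n E. r \<le> p \<or> c \<le> r"
  proof (rule ballI, rule ccontr)
    fix r assume r: "r \<in> roots n E" "\<not> (r \<le> p \<or> c \<le> r)"
    hence rl: "p < r" "r < c" by auto
    have nr: "\<forall>q. (q,r) \<notin> F"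
    proof (rule ccontr)
      assume "\<not> (\<forall>q. (q,r) \<notin> F)"
      hence "r \<in> ?D" using r by auto
      hence "c \<le> r" using Dfin c_def by simp
      thus False using rl by simp
    qed
    have rn: "r \<le> n" "c \<le> n" using r cD unfolding roots_def by auto
    have cp: "conn F c p" using conn_edge'[OF p] .
    have "conn F r c"
    proof (rule ccontr)
      assume nc: "\<not> conn F r c"
      from pf_prio[OF pfF rn nc conn_refl cp] rl show False by simp
    qed
    hence "conn F r p" using cp conn_trans by metis
    hence "r \<le> p" using L1'[OF pfF] nr by blast
    thus False using rl by simp
  qed
  hence "(p,c) \<in> chainA n E" using cD pc unfolding chainA_def by auto
  thus ?thesis using p by auto
qed

lemma pow_alt: "finite X \<Longrightarrow> (\<Sum>S\<in>Pow X. (-1::int)^card S) = (if X = {} then 1 else 0)"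
proof (induction rule: finite_induct)
  case empty thus ?case by simp
next
  case (insert x X)
  have inj: "inj_on (insert x) (Pow X)"
  proof (rule inj_onI)
    fix A B assume "A \<in> Pow X" "B \<in> Pow X" "insert x A = insert x B"
    moreover have "x \<notin> A" "x \<notin> B" using insert(2) calculation by auto
    ultimately show "A = B" using insert_ident by metis
  qed
  have disj: "Pow X \<inter> insert x ` Pow X = {}" using insert(2) by blast
  have fin: "finite (Pow X)" "finite (insert x ` Pow X)" using insert(1) by auto
  have "(\<Sum>S\<in>Pow (insert x X). (-1::int)^card S)
      = (\<Sum>S\<in>Pow X. (-1::int)^card S) + (\<Sum>S\<in>insert x ` Pow X. (-1::int)^card S)"
    unfolding Pow_insert using sum.union_disjoint[OF fin disj] by simp
  also have "(\<Sum>S\<in>insert x ` Pow X. (-1::int)^card S) = (\<Sum>S\<in>Pow X. (-1::int)^card (insert x S))"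
    using sum.reindex[OF inj] by simp
  also have "\<dots> = (\<Sum>S\<in>Pow X. - ((-1::int)^card S))"
  proof (rule sum.cong[OF refl])
    fix S assume "S \<in> Pow X"
    hence "finite S" "x \<notin> S" using insert(1,2) finite_subset by auto
    thus "(-1::int)^card (insert x S) = - ((-1::int)^card S)" by simp
  qed
  finally show ?case by (simp add: sum_negf)
qed

definition AS :: "nat set \<Rightarrow> (nat \<Rightarrow> nat set) \<Rightarrow> (nat \<times> nat) set" where
  "AS C Par = {(p,c). c \<in> C \<and> p \<in> Par c}"
definition SS :: "nat set \<Rightarrow> (nat \<Rightarrow> nat set) \<Rightarrow> (nat \<times> nat) set set" where
  "SS C Par = {S. S \<subseteq> AS C Par \<and> upar S}"

lemma AS_finite: "finite C \<Longrightarrow> (\<forall>c\<in>C. finite (Par c)) \<Longrightarrow> finite (AS C Par)"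
proof -
  assume a: "finite C" "\<forall>c\<in>C. finite (Par c)"
  have "AS C Par \<subseteq> (\<Union>c\<in>C. Par c) \<times> C" unfolding AS_def by auto
  moreover have "finite ((\<Union>c\<in>C. Par c) \<times> C)" using a by auto
  ultimately show ?thesis using finite_subset by blast
qed

lemma SS_finite: "finite C \<Longrightarrow> (\<forall>c\<in>C. finite (Par c)) \<Longrightarrow> finite (SS C Par)"
proof -
  assume a: "finite C" "\<forall>c\<in>C. finite (Par c)"
  have "SS C Par \<subseteq> Pow (AS C Par)" unfolding SS_def by auto
  thus ?thesis using AS_finite[OF a] finite_subset by blast
qed

lemma alt_partial:
  "finite C \<Longrightarrow> (\<forall>c\<in>C. finite (Par c)) \<Longrightarrow>
    (\<Sum>S\<in>SS C Par. (-1::int)^card S) = (\<Prod>c\<in>C. 1 - int (card (Par c)))"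
proof (induction C rule: finite_induct)
  case empty
  have "SS {} Par = {{}}" unfolding SS_def AS_def upar_def by auto
  thus ?case by simp
next
  case (insert c C)
  have finP: "\<forall>c\<in>C. finite (Par c)" "finite (Par c)" using insert(4) by auto
  let ?f = "\<lambda>(p,S). insert (p,c) S"
  have noc: "\<And>S p. S \<in> SS C Par \<Longrightarrow> (p,c) \<notin> S" using insert(2) unfolding SS_def AS_def by auto
  have eq: "SS (insert c C) Par = SS C Par \<union> ?f ` (Par c \<times> SS C Par)"
  proof (rule set_eqI, rule iffI)
    fix S assume S: "S \<in> SS (insert c C) Par"
    show "S \<in> SS C Par \<union> ?f ` (Par c \<times> SS C Par)"
    proof (cases "\<exists>p. (p,c) \<in> S")
      case False
      hence "S \<in> SS C Par" using S unfolding SS_def AS_def by auto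
      thus ?thesis by blast
    next
      case True
      then obtain p where p: "(p,c) \<in> S" by blast
      let ?S' = "S - {(p,c)}"
      have "\<forall>q. (q,c) \<notin> ?S'" using S p unfolding SS_def upar_def by blast
      hence "?S' \<in> SS C Par" using S unfolding SS_def AS_def upar_def by auto
      moreover have "p \<in> Par c" using S p unfolding SS_def AS_def by auto
      moreover have "S = ?f (p, ?S')" using p by auto
      ultimately show ?thesis by blast
    qed
  next
    fix S assume S: "S \<in> SS C Par \<union> ?f ` (Par c \<times> SS C Par)"
    show "S \<in> SS (insert c C) Par"
    proof (cases "S \<in> SS C Par")
      case True thus ?thesis unfolding SS_def AS_def by auto
    next
      case False
      then obtain p S' where pS: "p \<in> Par c" "S' \<in> SS C Par" "S = insert (p,c) S'" using S by auto
      have "S \<subseteq> AS (insert c C) Par" using pS unfolding SS_def AS_def by auto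
      moreover have "upar S" using pS noc[OF pS(2)] unfolding SS_def upar_def by auto
      ultimately show ?thesis unfolding SS_def by auto
    qed
  qed
  have disj: "SS C Par \<inter> ?f ` (Par c \<times> SS C Par) = {}" using noc by auto
  have inj: "inj_on ?f (Par c \<times> SS C Par)"
  proof (rule inj_onI)
    fix x y assume x: "x \<in> Par c \<times> SS C Par" and y: "y \<in> Par c \<times> SS C Par" and e: "?f x = ?f y"
    obtain p S where xx: "x = (p,S)" by force
    obtain q T where yy: "y = (q,T)" by force
    have nS: "\<forall>r. (r,c) \<notin> S" "\<forall>r. (r,c) \<notin> T" using noc x y xx yy by auto
    have "insert (p,c) S = insert (q,c) T" using e xx yy by simp
    hence "p = q" using nS by blast
    moreover have "S = T"
    proof -
      have "(p,c) \<notin> S" "(p,c) \<notin> T" using nS by auto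
      thus ?thesis using \<open>insert (p,c) S = insert (q,c) T\<close> \<open>p = q\<close> insert_ident by metis
    qed
    ultimately show "x = y" using xx yy by simp
  qed
  have finS: "finite (SS C Par)" using SS_finite[OF insert(1) finP(1)] .
  have fin2: "finite (?f ` (Par c \<times> SS C Par))" using finS finP(2) by auto
  have IH: "(\<Sum>S\<in>SS C Par. (-1::int)^card S) = (\<Prod>c\<in>C. 1 - int (card (Par c)))"
    using insert(3) finP(1) by blast
  have "(\<Sum>S\<in>?f ` (Par c \<times> SS C Par). (-1::int)^card S)
      = (\<Sum>x\<in>Par c \<times> SS C Par. (-1::int)^card (?f x))"
    using sum.reindex[OF inj] by simp
  also have "\<dots> = (\<Sum>x\<in>Par c \<times> SS C Par. - ((-1::int)^card (snd x)))"
  proof (rule sum.cong[OF refl])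
    fix x assume x: "x \<in> Par c \<times> SS C Par"
    obtain p S where xx: "x = (p,S)" by force
    have "S \<in> SS C Par" using x xx by auto
    hence "finite S" "(p,c) \<notin> S" using noc finS AS_finite[OF insert(1) finP(1)] unfolding SS_def
      by (auto intro: finite_subset)
    thus "(-1::int)^card (?f x) = - ((-1::int)^card (snd x))" using xx by simp
  qed
  also have "\<dots> = (\<Sum>p\<in>Par c. \<Sum>S\<in>SS C Par. - ((-1::int)^card S))"
    unfolding sum.cartesian_product by (simp add: case_prod_unfold)
  also have "\<dots> = - int (card (Par c)) * (\<Sum>S\<in>SS C Par. (-1::int)^card S)"
    by (simp add: sum_negf)
  finally have R: "(\<Sum>S\<in>?f ` (Par c \<times> SS C Par). (-1::int)^card S)
      = - int (card (Par c)) * (\<Sum>S\<in>SS C Par. (-1::int)^card S)" .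
  have "(\<Sum>S\<in>SS (insert c C) Par. (-1::int)^card S)
      = (\<Sum>S\<in>SS C Par. (-1::int)^card S) + (\<Sum>S\<in>?f ` (Par c \<times> SS C Par). (-1::int)^card S)"
    unfolding eq using sum.union_disjoint[OF finS fin2 disj] by simp
  also have "\<dots> = (1 - int (card (Par c))) * (\<Prod>c\<in>C. 1 - int (card (Par c)))"
    using R IH by (simp add: algebra_simps)
  also have "\<dots> = (\<Prod>c\<in>insert c C. 1 - int (card (Par c)))"
    using insert(1,2) by simp
  finally show ?case .
qed

definition FF :: "nat \<Rightarrow> (nat \<times> nat) set \<Rightarrow> (nat \<times> nat) set set" where
  "FF n E = {G. priority_forest n G \<and> E \<subseteq> G}"
definition gval :: "nat \<Rightarrow> (nat \<times> nat) set \<Rightarrow> (nat \<times> nat) set \<Rightarrow> int" where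
  "gval n E G = (if G - E \<subseteq> chainA n E then (-1::int)^card (G - E) else 0)"

lemma pf_finite: "priority_forest n G \<Longrightarrow> finite G"
  unfolding priority_forest_def using finite_subset by blast

lemma FF_finite: "finite (FF n E)"
proof -
  have "FF n E \<subseteq> Pow ({0..n} \<times> {0..n})" unfolding FF_def priority_forest_def by auto
  thus ?thesis using finite_subset by blast
qed

lemma union_inj: "priority_forest n E \<Longrightarrow> inj_on (\<lambda>S. E \<union> S) (Pow (chainA n E))"
proof (rule inj_onI)
  fix S T assume pf: "priority_forest n E" and S: "S \<in> Pow (chainA n E)" and T: "T \<in> Pow (chainA n E)"
    and e: "E \<union> S = E \<union> T"
  have "S \<inter> E = {}" "T \<inter> E = {}" using S T chainA_notin[OF pf] by auto
  hence "S = (E \<union> S) - E" "T = (E \<union> T) - E" by auto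
  thus "S = T" using e by simp
qed

lemma key_sum:
  assumes pf: "priority_forest n E" and G: "G \<in> FF n E" and ne: "G \<noteq> E"
  shows "(\<Sum>H\<in>{H\<in>FF n E. H \<subseteq> G}. gval n E H) = 0"
proof -
  let ?A = "chainA n E"
  let ?X = "{H\<in>FF n E. H \<subseteq> G}"
  have finX: "finite ?X" using FF_finite by simp
  have "(\<Sum>H\<in>?X. gval n E H) = (\<Sum>H\<in>{H\<in>?X. H - E \<subseteq> ?A}. (-1::int)^card (H - E))"
    unfolding gval_def by (rule sum.inter_filter[OF finX, symmetric])
  also have "{H\<in>?X. H - E \<subseteq> ?A} = (\<lambda>S. E \<union> S) ` Pow (G \<inter> ?A)"
  proof (rule set_eqI, rule iffI)
    fix H assume H: "H \<in> {H\<in>?X. H - E \<subseteq> ?A}"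
    hence "H = E \<union> (H - E)" "H - E \<in> Pow (G \<inter> ?A)" unfolding FF_def by auto
    thus "H \<in> (\<lambda>S. E \<union> S) ` Pow (G \<inter> ?A)" by blast
  next
    fix H assume "H \<in> (\<lambda>S. E \<union> S) ` Pow (G \<inter> ?A)"
    then obtain S where S: "S \<subseteq> G \<inter> ?A" "H = E \<union> S" by auto
    have pfG: "priority_forest n G" "E \<subseteq> G" using G unfolding FF_def by auto
    have "upar S" unfolding upar_def using S pf_up[OF pfG(1)] by blast
    hence "priority_forest n H" using claim_a[OF pf _ \<open>upar S\<close>] S by auto
    thus "H \<in> {H\<in>?X. H - E \<subseteq> ?A}" using S pfG unfolding FF_def by auto
  qed
  also have "(\<Sum>H\<in>(\<lambda>S. E \<union> S) ` Pow (G \<inter> ?A). (-1::int)^card (H - E))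
      = (\<Sum>S\<in>Pow (G \<inter> ?A). (-1::int)^card ((E \<union> S) - E))"
  proof -
    have "inj_on (\<lambda>S. E \<union> S) (Pow (G \<inter> ?A))"
      by (rule inj_on_subset[OF union_inj[OF pf]]) auto
    from sum.reindex[OF this] show ?thesis by simp
  qed
  also have "\<dots> = (\<Sum>S\<in>Pow (G \<inter> ?A). (-1::int)^card S)"
  proof (rule sum.cong[OF refl])
    fix S assume "S \<in> Pow (G \<inter> ?A)"
    hence "(E \<union> S) - E = S" using chainA_notin[OF pf] by auto
    thus "(-1::int)^card ((E \<union> S) - E) = (-1::int)^card S" by simp
  qed
  also have "\<dots> = 0"
  proof -
    have "finite (G \<inter> ?A)" using G pf_finite unfolding FF_def by auto
    moreover have "G \<inter> ?A \<noteq> {}" using claim_b[OF pf _ _ ne] G unfolding FF_def by auto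
    ultimately show ?thesis using pow_alt[of "G \<inter> ?A"] by (simp only: if_False)
  qed
  finally show ?thesis .
qed

lemma mob_fuel:
  assumes pf: "priority_forest n E"
  shows "\<forall>G. G \<in> FF n E \<longrightarrow> card (G - E) \<le> k \<longrightarrow>
           mobius_fuel k (Pi_carrier n) Pi_le (Some E) (Some G) = gval n E G"
proof (induction k)
  case 0
  show ?case
  proof (intro allI impI)
    fix G assume G: "G \<in> FF n E" "card (G - E) \<le> 0"
    have "finite (G - E)" using G pf_finite unfolding FF_def by auto
    hence "G - E = {}" using G by simp
    hence "G = E" using G unfolding FF_def by auto
    thus "mobius_fuel 0 (Pi_carrier n) Pi_le (Some E) (Some G) = gval n E G"
      unfolding gval_def by simp
  qed
next
  case (Suc k)
  show ?case
  proof (intro allI impI)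
    fix G assume G: "G \<in> FF n E" "card (G - E) \<le> Suc k"
    show "mobius_fuel (Suc k) (Pi_carrier n) Pi_le (Some E) (Some G) = gval n E G"
    proof (cases "G = E")
      case True thus ?thesis unfolding gval_def by simp
    next
      case False
      have EG: "E \<subseteq> G" using G unfolding FF_def by auto
      let ?Y = "{H\<in>FF n E. H \<subseteq> G \<and> H \<noteq> G}"
      have seteq: "{z \<in> Pi_carrier n. Pi_le (Some E) z \<and> Pi_le z (Some G) \<and> z \<noteq> Some G} = Some ` ?Y"
      proof (rule set_eqI)
        fix z show "z \<in> {z \<in> Pi_carrier n. Pi_le (Some E) z \<and> Pi_le z (Some G) \<and> z \<noteq> Some G} \<longleftrightarrow> z \<in> Some ` ?Y"
          by (cases z) (auto simp: Pi_carrier_def FF_def)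
      qed
      have "mobius_fuel (Suc k) (Pi_carrier n) Pi_le (Some E) (Some G)
          = - (\<Sum>z\<in>Some ` ?Y. mobius_fuel k (Pi_carrier n) Pi_le (Some E) z)"
        using False EG seteq by simp
      also have "\<dots> = - (\<Sum>H\<in>?Y. mobius_fuel k (Pi_carrier n) Pi_le (Some E) (Some H))"
        by (simp add: sum.reindex)
      also have "\<dots> = - (\<Sum>H\<in>?Y. gval n E H)"
      proof -
        have "mobius_fuel k (Pi_carrier n) Pi_le (Some E) (Some H) = gval n E H" if H: "H \<in> ?Y" for H
        proof -
          have "finite (G - E)" using G pf_finite unfolding FF_def by auto
          moreover have "H - E \<subset> G - E" using H unfolding FF_def by auto
          ultimately have "card (H - E) < card (G - E)" by (simp add: psubset_card_mono)
          thus ?thesis using Suc.IH H G by auto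
        qed
        thus ?thesis by simp
      qed
      also have "?Y = {H\<in>FF n E. H \<subseteq> G} - {G}" by auto
      also have "(\<Sum>H\<in>{H\<in>FF n E. H \<subseteq> G} - {G}. gval n E H)
          = (\<Sum>H\<in>{H\<in>FF n E. H \<subseteq> G}. gval n E H) - gval n E G"
        using G FF_finite by (simp add: sum_diff1)
      also have "(\<Sum>H\<in>{H\<in>FF n E. H \<subseteq> G}. gval n E H) = 0" using key_sum[OF pf G(1) False] .
      finally show ?thesis by simp
    qed
  qed
qed

lemma card_GE:
  assumes pf: "priority_forest n E" and G: "G \<in> FF n E"
  shows "card (G - E) \<le> card (roots n E - {0})"
proof -
  have pfG: "priority_forest n G" "E \<subseteq> G" using G unfolding FF_def by auto
  have "inj_on snd (G - E)"
  proof (rule inj_onI)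
    fix x y assume "x \<in> G - E" "y \<in> G - E" "snd x = snd y"
    thus "x = y" using pf_up[OF pfG(1)] by (metis DiffD1 prod.collapse)
  qed
  moreover have "snd ` (G - E) \<subseteq> roots n E - {0}"
  proof
    fix c assume "c \<in> snd ` (G - E)"
    then obtain p where p: "(p,c) \<in> G" "(p,c) \<notin> E" by auto
    have "\<forall>q. (q,c) \<notin> E" using p pf_up[OF pfG(1)] pfG(2) by blast
    moreover have "c \<le> n" "p < c" using pf_sub[OF pfG(1) p(1)] pf_lt[OF pfG(1) p(1)] by auto
    ultimately show "c \<in> roots n E - {0}" unfolding roots_def by auto
  qed
  moreover have "finite (roots n E - {0})" using finite_roots by simp
  ultimately show ?thesis using card_inj_on_le by blast
qed

lemma card_carrier:
  assumes pf: "priority_forest n E"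
  shows "card (roots n E - {0}) + 2 \<le> card (Pi_carrier n)"
proof -
  let ?h = "\<lambda>c. E \<union> {(c - 1, c)}"
  have inA: "(c - 1, c) \<in> chainA n E" if c: "c \<in> roots n E - {0}" for c
    using c unfolding chainA_def by auto
  have hF: "?h c \<in> FF n E - {E}" if c: "c \<in> roots n E - {0}" for c
  proof -
    have u: "upar {(c - 1, c)}" unfolding upar_def by auto
    have "{(c - 1, c)} \<subseteq> chainA n E" using inA[OF c] by auto
    from claim_a[OF pf this u] have "priority_forest n (?h c)" .
    moreover have "(c - 1, c) \<notin> E" using chainA_notin[OF pf inA[OF c]] .
    ultimately show ?thesis unfolding FF_def by auto
  qed
  have inj: "inj_on ?h (roots n E - {0})"
  proof (rule inj_onI)
    fix c d assume c: "c \<in> roots n E - {0}" and d: "d \<in> roots n E - {0}" and e: "?h c = ?h d"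
    have "(c - 1, c) \<notin> E" using chainA_notin[OF pf inA[OF c]] .
    hence "(c - 1, c) = (d - 1, d)" using e by blast
    thus "c = d" by simp
  qed
  have "card (roots n E - {0}) \<le> card (FF n E - {E})"
    using card_inj_on_le[OF inj] hF FF_finite by blast
  also have "\<dots> = card (FF n E) - 1"
  proof -
    have "E \<in> FF n E" using pf unfolding FF_def by simp
    thus ?thesis using FF_finite by (simp add: card_Diff_singleton)
  qed
  finally have 0: "card (roots n E - {0}) \<le> card (FF n E) - 1" .
  have "E \<in> FF n E" using pf unfolding FF_def by simp
  hence "card (FF n E) > 0" using FF_finite by (auto simp: card_gt_0_iff)
  hence 1: "card (roots n E - {0}) + 1 \<le> card (FF n E)" using 0 by linarith
  have "insert None (Some ` FF n E) \<subseteq> Pi_carrier n" unfolding Pi_carrier_def FF_def by auto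
  moreover have "finite (Pi_carrier n)"
  proof -
    have "Pi_carrier n \<subseteq> insert None (Some ` Pow ({0..n} \<times> {0..n}))"
      unfolding Pi_carrier_def priority_forest_def by auto
    thus ?thesis using finite_subset by blast
  qed
  ultimately have "card (insert None (Some ` FF n E)) \<le> card (Pi_carrier n)" using card_mono by blast
  moreover have "card (insert None (Some ` FF n E)) = card (FF n E) + 1"
    using FF_finite by (simp add: card_image)
  ultimately show ?thesis using 1 by simp
qed

lemma mu_top:
  assumes pf: "priority_forest n E"
  shows "mu_Pi n (Some E) None = - (\<Sum>G\<in>FF n E. gval n E G)"
proof -
  obtain k where k: "card (Pi_carrier n) = Suc k"
    using card_carrier[OF pf] by (cases "card (Pi_carrier n)") auto
  have bnd: "card (G - E) \<le> k" if "G \<in> FF n E" for G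
    using card_GE[OF pf that] card_carrier[OF pf] k by simp
  have seteq: "{z \<in> Pi_carrier n. Pi_le (Some E) z \<and> Pi_le z None \<and> z \<noteq> None} = Some ` FF n E"
  proof (rule set_eqI)
    fix z show "z \<in> {z \<in> Pi_carrier n. Pi_le (Some E) z \<and> Pi_le z None \<and> z \<noteq> None} \<longleftrightarrow> z \<in> Some ` FF n E"
      by (cases z) (auto simp: Pi_carrier_def FF_def)
  qed
  have "mu_Pi n (Some E) None = - (\<Sum>z\<in>Some ` FF n E. mobius_fuel k (Pi_carrier n) Pi_le (Some E) z)"
    unfolding mu_Pi_def mobius_def k using seteq by simp
  also have "\<dots> = - (\<Sum>G\<in>FF n E. mobius_fuel k (Pi_carrier n) Pi_le (Some E) (Some G))"
    by (simp add: sum.reindex)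
  also have "\<dots> = - (\<Sum>G\<in>FF n E. gval n E G)"
    using mob_fuel[OF pf, of k] bnd by simp
  finally show ?thesis .
qed

definition Parr :: "nat \<Rightarrow> (nat \<times> nat) set \<Rightarrow> nat \<Rightarrow> nat set" where
  "Parr n E c = {p. p < c \<and> (\<forall>r\<in>roots n E. r \<le> p \<or> c \<le> r)}"

lemma mu_prod:
  assumes pf: "priority_forest n E"
  shows "mu_Pi n (Some E) None = - (\<Prod>c\<in>roots n E - {0}. 1 - int (card (Parr n E c)))"
proof -
  let ?A = "chainA n E"
  have finX: "finite (FF n E)" using FF_finite by simp
  have "(\<Sum>G\<in>FF n E. gval n E G) = (\<Sum>G\<in>{G\<in>FF n E. G - E \<subseteq> ?A}. (-1::int)^card (G - E))"
    unfolding gval_def by (rule sum.inter_filter[OF finX, symmetric])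
  also have "{G\<in>FF n E. G - E \<subseteq> ?A} = (\<lambda>S. E \<union> S) ` {S. S \<subseteq> ?A \<and> upar S}"
  proof (rule set_eqI, rule iffI)
    fix H assume H: "H \<in> {G\<in>FF n E. G - E \<subseteq> ?A}"
    hence "upar (H - E)" unfolding FF_def upar_def using pf_up by blast
    moreover have "H = E \<union> (H - E)" using H unfolding FF_def by auto
    ultimately show "H \<in> (\<lambda>S. E \<union> S) ` {S. S \<subseteq> ?A \<and> upar S}" using H by blast
  next
    fix H assume "H \<in> (\<lambda>S. E \<union> S) ` {S. S \<subseteq> ?A \<and> upar S}"
    then obtain S where S: "S \<subseteq> ?A" "upar S" "H = E \<union> S" by auto
    hence "priority_forest n H" using claim_a[OF pf] by auto
    thus "H \<in> {G\<in>FF n E. G - E \<subseteq> ?A}" using S unfolding FF_def by auto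
  qed
  also have "(\<Sum>H\<in>(\<lambda>S. E \<union> S) ` {S. S \<subseteq> ?A \<and> upar S}. (-1::int)^card (H - E))
      = (\<Sum>S\<in>{S. S \<subseteq> ?A \<and> upar S}. (-1::int)^card ((E \<union> S) - E))"
  proof -
    have "inj_on (\<lambda>S. E \<union> S) {S. S \<subseteq> ?A \<and> upar S}"
      by (rule inj_on_subset[OF union_inj[OF pf]]) auto
    from sum.reindex[OF this] show ?thesis by simp
  qed
  also have "\<dots> = (\<Sum>S\<in>{S. S \<subseteq> ?A \<and> upar S}. (-1::int)^card S)"
  proof (rule sum.cong[OF refl])
    fix S assume "S \<in> {S. S \<subseteq> ?A \<and> upar S}"
    hence "(E \<union> S) - E = S" using chainA_notin[OF pf] by auto
    thus "(-1::int)^card ((E \<union> S) - E) = (-1::int)^card S" by simp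
  qed
  also have "{S. S \<subseteq> ?A \<and> upar S} = SS (roots n E - {0}) (Parr n E)"
  proof -
    have "?A = AS (roots n E - {0}) (Parr n E)" unfolding chainA_def AS_def Parr_def by auto
    thus ?thesis unfolding SS_def by simp
  qed
  also have "(\<Sum>S\<in>SS (roots n E - {0}) (Parr n E). (-1::int)^card S)
      = (\<Prod>c\<in>roots n E - {0}. 1 - int (card (Parr n E c)))"
  proof (rule alt_partial)
    show "finite (roots n E - {0})" using finite_roots by simp
    have "Parr n E c \<subseteq> {..<c}" for c unfolding Parr_def by auto
    thus "\<forall>c\<in>roots n E - {0}. finite (Parr n E c)" using finite_subset by blast
  qed
  finally show ?thesis using mu_top[OF pf] by simp
qed

lemma R_facts:
  assumes pf: "priority_forest n E"
  defines "R \<equiv> forest_roots n E"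
  shows "set R = roots n E" "sorted_wrt (<) R" "length R = card (roots n E)"
proof -
  have eq: "R = sorted_list_of_set (roots n E)" unfolding R_def forest_roots_def roots_def by simp
  show "set R = roots n E" using eq finite_roots by (simp add: set_sorted_list_of_set)
  show "sorted_wrt (<) R" using eq by (simp add: strict_sorted_list_of_set)
  show "length R = card (roots n E)" using eq by (simp add: length_sorted_list_of_set)
qed

lemma sw_less_iff: "sorted_wrt (<) (R::nat list) \<Longrightarrow> i < length R \<Longrightarrow> j < length R \<Longrightarrow> R!i < R!j \<longleftrightarrow> i < j"
proof -
  assume s: "sorted_wrt (<) R" and i: "i < length R" and j: "j < length R"
  show ?thesis
  proof
    assume a: "R!i < R!j"
    show "i < j"
    proof (rule ccontr)
      assume "\<not> i < j"
      hence "j < i \<or> j = i" by auto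
      thus False
      proof
        assume ji: "j < i"
        have "R!j < R!i" using sorted_wrt_nth_less[OF s ji i] .
        thus False using a by simp
      next
        assume "j = i" thus False using a by simp
      qed
    qed
  next
    assume ij: "i < j" show "R!i < R!j" using sorted_wrt_nth_less[OF s ij j] .
  qed
qed

lemma sw_le_iff: "sorted_wrt (<) (R::nat list) \<Longrightarrow> i < length R \<Longrightarrow> j < length R \<Longrightarrow> R!i \<le> R!j \<longleftrightarrow> i \<le> j"
proof -
  assume a: "sorted_wrt (<) R" "i < length R" "j < length R"
  have "R!j < R!i \<longleftrightarrow> j < i" using sw_less_iff[OF a(1) a(3) a(2)] .
  have "R!i \<le> R!j \<longleftrightarrow> \<not> (R!j < R!i)" by (rule not_less[symmetric])
  also have "\<dots> \<longleftrightarrow> \<not> (j < i)" using \<open>R!j < R!i \<longleftrightarrow> j < i\<close> by (rule arg_cong)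
  also have "\<dots> \<longleftrightarrow> i \<le> j" by (rule not_less)
  finally show ?thesis .
qed

lemma tree_char:
  assumes pf: "priority_forest n E"
  defines "R \<equiv> forest_roots n E"
  assumes k: "Suc k < length R"
  shows "(v \<le> n \<and> conn E (R!k) v) \<longleftrightarrow> (R!k \<le> v \<and> v < R!(Suc k))"
proof -
  note RF = R_facts[OF pf, folded R_def]
  have "R!k \<in> set R" "R!(Suc k) \<in> set R" using k by simp_all
  hence rk: "R!k \<in> roots n E" "R!(Suc k) \<in> roots n E" using RF(1) by simp_all
  have lt: "R!k < R!(Suc k)" using sw_less_iff[OF RF(2)] k by simp
  have sn: "R!(Suc k) \<le> n" using rk unfolding roots_def by auto
  show ?thesis
  proof
    assume a: "v \<le> n \<and> conn E (R!k) v"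
    hence ro: "rootof n E v = R!k" using conn_root_iff[OF pf rk(1)] by blast
    have "R!k \<le> v" using rootof_props(2)[OF pf, of v] a ro by simp
    moreover have "v < R!(Suc k)"
    proof (rule ccontr)
      assume "\<not> v < R!(Suc k)"
      hence "R!(Suc k) \<le> rootof n E v" using rootof_props(3)[OF pf] a rk(2) by simp
      thus False using ro lt by simp
    qed
    ultimately show "R!k \<le> v \<and> v < R!(Suc k)" by simp
  next
    assume a: "R!k \<le> v \<and> v < R!(Suc k)"
    hence vn: "v \<le> n" using sn by simp
    have m: "rootof n E v \<in> roots n E" "rootof n E v \<le> v" "R!k \<le> rootof n E v"
      using rootof_props[OF pf vn] a rk by auto
    have "rootof n E v \<in> set R" using RF(1) m(1) by simp
    then obtain j where j: "j < length R" "R!j = rootof n E v" by (auto simp: in_set_conv_nth)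
    have "R!j < R!(Suc k)" using j m a by simp
    hence "j < Suc k" using sw_less_iff[OF RF(2) j(1) k] by simp
    hence "R!j \<le> R!k" using sw_le_iff[OF RF(2) j(1)] k by simp
    hence "rootof n E v = R!k" using j m by simp
    thus "v \<le> n \<and> conn E (R!k) v" using conn_root_iff[OF pf rk(1) vn] vn by simp
  qed
qed

lemma tree_vertices_eq:
  assumes pf: "priority_forest n E" and k: "Suc k < length (forest_roots n E)"
  shows "tree_vertices n E k = {forest_roots n E ! k ..< forest_roots n E ! Suc k}"
proof (rule set_eqI)
  fix v
  have "v \<in> tree_vertices n E k \<longleftrightarrow> (v \<le> n \<and> conn E (forest_roots n E ! k) v)"
    unfolding tree_vertices_def by simp
  also have "\<dots> \<longleftrightarrow> (forest_roots n E ! k \<le> v \<and> v < forest_roots n E ! Suc k)"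
    by (rule tree_char[OF pf k])
  finally show "v \<in> tree_vertices n E k \<longleftrightarrow> v \<in> {forest_roots n E ! k ..< forest_roots n E ! Suc k}"
    by simp
qed

lemma tree_edges_eq:
  assumes pf: "priority_forest n E" and k: "Suc k < length (forest_roots n E)"
  shows "tree_edges n E k = forest_roots n E ! Suc k - forest_roots n E ! k - 1"
proof -
  let ?R = "forest_roots n E"
  let ?T = "tree_vertices n E k"
  let ?X = "{(p, c) \<in> E. p \<in> ?T \<and> c \<in> ?T}"
  note RF = R_facts[OF pf]
  have T: "?T = {?R!k ..< ?R!Suc k}" using tree_vertices_eq[OF pf k] .
  have "?R!k \<in> set ?R" using k by simp
  hence rk: "?R!k \<in> roots n E" using RF(1) by simp
  have inj: "inj_on snd ?X"
  proof (rule inj_onI)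
    fix x y assume "x \<in> ?X" "y \<in> ?X" "snd x = snd y"
    moreover obtain a b where "x = (a,b)" by force
    moreover obtain a' b' where "y = (a',b')" by force
    ultimately show "x = y" using pf_up[OF pf, of a b a'] by auto
  qed
  have img: "snd ` ?X = ?T - {?R!k}"
  proof (rule set_eqI, rule iffI)
    fix c assume "c \<in> snd ` ?X"
    then obtain p where p: "(p,c) \<in> E" "p \<in> ?T" "c \<in> ?T" by auto
    have "c \<noteq> ?R!k" using rk p(1) unfolding roots_def by auto
    thus "c \<in> ?T - {?R!k}" using p by auto
  next
    fix c assume c: "c \<in> ?T - {?R!k}"
    have cn: "c \<le> n" "conn E (?R!k) c" using c unfolding tree_vertices_def by auto
    have "c \<notin> roots n E"
    proof
      assume "c \<in> roots n E"
      hence "c \<in> set ?R" using RF(1) by simp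
      then obtain j where j: "j < length ?R" "?R!j = c" by (auto simp: in_set_conv_nth)
      have "?R!k < ?R!j" "?R!j < ?R!Suc k" using c j T by auto
      hence "k < j" "j < Suc k" using sw_less_iff[OF RF(2)] j(1) k by auto
      thus False by simp
    qed
    then obtain p where p: "(p,c) \<in> E" using cn unfolding roots_def by auto
    have "p \<le> n" using pf_sub[OF pf p] by simp
    moreover have "conn E (?R!k) p" using conn_trans[OF cn(2) conn_edge'[OF p]] .
    ultimately have "p \<in> ?T" unfolding tree_vertices_def by simp
    thus "c \<in> snd ` ?X" using p c by force
  qed
  have "tree_edges n E k = card ?X" unfolding tree_edges_def by simp
  also have "\<dots> = card (snd ` ?X)" using card_image[OF inj] by simp
  also have "\<dots> = card (?T - {?R!k})" using img by simp
  also have "\<dots> = ?R!Suc k - ?R!k - 1"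
  proof -
    have "?R!k \<in> ?T" using T sw_less_iff[OF RF(2)] k by auto
    thus ?thesis using T by simp
  qed
  finally show ?thesis .
qed

lemma parr_eq:
  assumes pf: "priority_forest n E" and k: "Suc k < length (forest_roots n E)"
  shows "Parr n E (forest_roots n E ! Suc k) = {forest_roots n E ! k ..< forest_roots n E ! Suc k}"
proof -
  let ?R = "forest_roots n E"
  note RF = R_facts[OF pf]
  show ?thesis
  proof (rule set_eqI, rule iffI)
    fix p assume "p \<in> Parr n E (?R ! Suc k)"
    hence p: "p < ?R!Suc k" "\<forall>r\<in>roots n E. r \<le> p \<or> ?R!Suc k \<le> r" unfolding Parr_def by auto
    have "?R!k \<in> roots n E" using RF(1) k by auto
    moreover have "?R!k < ?R!Suc k" using sw_less_iff[OF RF(2)] k by simp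
    ultimately have "?R!k \<le> p" using p by force
    thus "p \<in> {?R!k ..< ?R!Suc k}" using p by simp
  next
    fix p assume p: "p \<in> {?R!k ..< ?R!Suc k}"
    have "r \<le> p \<or> ?R!Suc k \<le> r" if r: "r \<in> roots n E" for r
    proof -
      have "r \<in> set ?R" using RF(1) r by simp
      then obtain j where j: "j < length ?R" "?R!j = r" by (auto simp: in_set_conv_nth)
      show ?thesis
      proof (cases "j \<le> k")
        case True
        have kl: "k < length ?R" using k by simp
        have "r \<le> ?R!k" using sw_le_iff[OF RF(2) j(1) kl] True j by simp
        thus ?thesis using p by simp
      next
        case False thus ?thesis using sw_le_iff[OF RF(2) _ j(1), of "Suc k"] k j by simp
      qed
    qed
    thus "p \<in> Parr n E (?R ! Suc k)" using p unfolding Parr_def by auto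
  qed
qed

lemma corank_eq:
  assumes pf: "priority_forest n E"
  shows "corank n E = card (roots n E)"
proof -
  have inj: "inj_on snd E"
  proof (rule inj_onI)
    fix x y assume "x \<in> E" "y \<in> E" "snd x = snd y"
    moreover obtain a b where "x = (a,b)" by force
    moreover obtain a' b' where "y = (a',b')" by force
    ultimately show "x = y" using pf_up[OF pf, of a b a'] by auto
  qed
  have img: "snd ` E = {0..n} - roots n E"
  proof (rule set_eqI, rule iffI)
    fix c assume "c \<in> snd ` E"
    then obtain p where p: "(p,c) \<in> E" by auto
    thus "c \<in> {0..n} - roots n E" using pf_sub[OF pf p] unfolding roots_def by auto
  next
    fix c assume "c \<in> {0..n} - roots n E"
    then obtain p where "(p,c) \<in> E" unfolding roots_def by auto
    thus "c \<in> snd ` E" by force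
  qed
  have sub: "roots n E \<subseteq> {0..n}" unfolding roots_def by auto
  have "card E = card ({0..n} - roots n E)" using card_image[OF inj] img by simp
  also have "\<dots> = Suc n - card (roots n E)" using card_Diff_subset[OF finite_roots sub] by simp
  finally have "card E = Suc n - card (roots n E)" .
  moreover have "card (roots n E) \<le> Suc n" using card_mono[OF _ sub] by simp
  ultimately show ?thesis unfolding corank_def by simp
qed

lemma mu_final:
  assumes pf: "priority_forest n E"
  defines "L \<equiv> length (forest_roots n E)"
  shows "L \<ge> 1" "mu_Pi n (Some E) None = (-1) ^ L * (\<Prod>k < L - 1. int (tree_edges n E k))"
        "corank n E = L"
proof -
  let ?R = "forest_roots n E"
  note RF = R_facts[OF pf]
  have Lc: "L = card (roots n E)" using RF(3) L_def by simp
  show "corank n E = L" using corank_eq[OF pf] Lc by simp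
  have z: "0 \<in> roots n E" using zero_root[OF pf] .
  have "card (roots n E) > 0" using z finite_roots by (auto simp: card_gt_0_iff)
  thus L1: "L \<ge> 1" using Lc by simp
  have "0 \<in> set ?R" using RF(1) z by simp
  then obtain j where j: "j < L" "?R!j = 0" unfolding L_def by (auto simp: in_set_conv_nth)
  have R0: "?R!0 = 0"
  proof -
    have jl: "j < length ?R" using j L_def by simp
    have ne: "?R \<noteq> []" using jl by auto
    have "?R!0 \<le> ?R!j" using sw_le_iff[OF RF(2), of 0 j] jl ne by simp
    thus ?thesis using j by simp
  qed
  have img: "roots n E - {0} = (\<lambda>k. ?R!Suc k) ` {..<L-1}"
  proof (rule set_eqI, rule iffI)
    fix c assume c: "c \<in> roots n E - {0}"
    hence "c \<in> set ?R" using RF(1) by simp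
    then obtain i where i: "i < L" "?R!i = c" unfolding L_def by (auto simp: in_set_conv_nth)
    have "i \<noteq> 0"
    proof
      assume "i = 0" thus False using i c R0 by simp
    qed
    then obtain k where "i = Suc k" using not0_implies_Suc by blast
    thus "c \<in> (\<lambda>k. ?R!Suc k) ` {..<L-1}" using i by force
  next
    fix c assume "c \<in> (\<lambda>k. ?R!Suc k) ` {..<L-1}"
    then obtain k where k: "k < L - 1" "c = ?R!Suc k" by auto
    have kl: "Suc k < length ?R" using k L_def by simp
    have ne: "?R \<noteq> []" using kl by auto
    have "?R!0 < ?R!Suc k" using sw_less_iff[OF RF(2), of 0 "Suc k"] kl ne by simp
    moreover have "?R!Suc k \<in> set ?R" using kl by simp
    hence "?R!Suc k \<in> roots n E" using RF(1) by simp
    ultimately show "c \<in> roots n E - {0}" using k R0 by simp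
  qed
  have inj: "inj_on (\<lambda>k. ?R!Suc k) {..<L-1}"
  proof (rule inj_onI)
    fix a b assume ab: "a \<in> {..<L-1}" "b \<in> {..<L-1}" and e: "?R!Suc a = ?R!Suc b"
    have sa: "Suc a < length ?R" "Suc b < length ?R" using ab unfolding L_def by auto
    have "Suc a \<le> Suc b" using sw_le_iff[OF RF(2) sa(1) sa(2)] e by simp
    moreover have "Suc b \<le> Suc a" using sw_le_iff[OF RF(2) sa(2) sa(1)] e by simp
    ultimately show "a = b" by simp
  qed
  have "mu_Pi n (Some E) None = - (\<Prod>c\<in>roots n E - {0}. 1 - int (card (Parr n E c)))"
    using mu_prod[OF pf] .
  also have "(\<Prod>c\<in>roots n E - {0}. 1 - int (card (Parr n E c)))
      = (\<Prod>k<L-1. 1 - int (card (Parr n E (?R!Suc k))))"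
    unfolding img using prod.reindex[OF inj] by simp
  also have "\<dots> = (\<Prod>k<L-1. - int (tree_edges n E k))"
  proof (rule prod.cong[OF refl])
    fix k assume "k \<in> {..<L-1}"
    hence k: "Suc k < length ?R" using L_def by simp
    have lt: "?R!k < ?R!Suc k" using sw_less_iff[OF RF(2)] k by simp
    show "1 - int (card (Parr n E (?R!Suc k))) = - int (tree_edges n E k)"
      using parr_eq[OF pf k] tree_edges_eq[OF pf k] lt by simp
  qed
  also have "\<dots> = (-1) ^ (L - 1) * (\<Prod>k<L-1. int (tree_edges n E k))"
    by (simp add: prod_uminus)
  finally show "mu_Pi n (Some E) None = (-1) ^ L * (\<Prod>k < L - 1. int (tree_edges n E k))"
    using L1 by (cases L) auto
qed

theorem lemma5p13:
  fixes n :: nat and E :: "(nat \<times> nat) set"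
  assumes "priority_forest n E"
  shows "(length (forest_roots n E) = 1 \<longrightarrow> mu_Pi n (Some E) None = -1) \<and>
         (length (forest_roots n E) \<noteq> 1 \<longrightarrow>
            length (forest_roots n E) \<ge> 2 \<and>
            mu_Pi n (Some E) None =
              (-1) ^ corank n E * (\<Prod>k < length (forest_roots n E) - 1. int (tree_edges n E k)))"
  using mu_final[OF assms] by auto

end
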